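(* Let $\bm{C}\in\mathbb{R}_+^{n\times m}$ be a cost matrix with nonnegative entries, let $\bm{a}\in\mathbb{R}_+^n$, let $\bm{b}\in\mathbb{R}_+^m$ be a positive measure with total mass $c_{\bm{b}}=\sum_{j=1}^m\bm{b}_j$, let $\tau>0$, and let $r$ be an integer with $2\le r\le\min\{n,m\}$. Let $\mathrm{SR}\text{-}\mathrm{W}^\star(\mu_{\bm{b}})$ be the optimal value of the semi-relaxed problem $\min\{\langle\bm{C},\bm{P}\rangle_F+\tau\,\mathrm{KL}(\bm{P}\bm{1}_m\|\bm{a}):\bm{P}\in\mathbb{R}_+^{n\times m},\ \bm{P}^{\mathrm T}\bm{1}_n=\bm{b}\}$ and $\mathrm{SR}\text{-}\mathrm{W}^\star_r(\mu_{\bm{b}})$ the optimal value of the same problem with the additional constraint $\mathrm{rk}_+(\bm{P})\le r$. Then $$\big|\mathrm{SR}\text{-}\mathrm{W}^\star_r(\mu_{\bm{b}})-\mathrm{SR}\text{-}\mathrm{W}^\star(\mu_{\bm{b}})\big|\le c_{\bm{b}}\Big(\max_{p,q}\bm{C}_{pq}-\min_{p,q}\bm{C}_{pq}\Big)\ln\!\big(\min\{n,m\}/(r-1)\big).$$ In particular, for probability vectors $\bm{a}\in\Delta_n$, $\bm{b}\in\Delta_m$, letting $\mathrm{W}^\star(\mu_{\bm{a}},\mu_{\bm{b}})=\min_{\bm{P}\in\Pi_{\bm{a},\bm{b}}}\langle\bm{C},\bm{P}\rangle_F$ and $\mathrm{W}^\star_r(\mu_{\bm{a}},\mu_{\bm{b}})=\min_{\bm{P}\in\Pi_{\bm{a},\bm{b}},\,\mathrm{rk}_+(\bm{P})\le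 r}\langle\bm{C},\bm{P}\rangle_F$, one has $$\big|\mathrm{W}^\star_r(\mu_{\bm{a}},\mu_{\bm{b}})-\mathrm{W}^\star(\mu_{\bm{a}},\mu_{\bm{b}})\big|\le\Big(\max_{p,q}\bm{C}_{pq}-\min_{p,q}\bm{C}_{pq}\Big)\ln\!\big(\min\{n,m\}/(r-1)\big).$$
   Context: The nonnegative rank $\mathrm{rk}_+(\bm{M})$ of a nonnegative matrix is the least number of nonnegative rank-one matrices summing to $\bm{M}$. $\Pi_{\bm{a},\bm{b}}=\{\bm{P}\in\mathbb{R}_+^{n\times m}:\bm{P}\bm{1}_m=\bm{a},\ \bm{P}^{\mathrm T}\bm{1}_n=\bm{b}\}$. $\mathrm{KL}$ is the (generalized) Kullback–Leibler divergence. $\Delta_d$ is the probability simplex in $\mathbb{R}^d$. *)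

theory Defs
  imports "HOL-Analysis.Analysis"
begin

definition nonneg_mat :: "('n \<Rightarrow> 'm \<Rightarrow> real) \<Rightarrow> bool" where
  "nonneg_mat P \<longleftrightarrow> (\<forall>i j. 0 \<le> P i j)"

definition row_sums :: "('n \<Rightarrow> 'm::finite \<Rightarrow> real) \<Rightarrow> 'n \<Rightarrow> real" where
  "row_sums P = (\<lambda>i. \<Sum>j\<in>UNIV. P i j)"

definition col_sums :: "('n::finite \<Rightarrow> 'm \<Rightarrow> real) \<Rightarrow> 'm \<Rightarrow> real" where
  "col_sums P = (\<lambda>j. \<Sum>i\<in>UNIV. P i j)"

definition frob :: "('n::finite \<Rightarrow> 'm::finite \<Rightarrow> real) \<Rightarrow> ('n \<Rightarrow> 'm \<Rightarrow> real) \<Rightarrow> real" where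
  "frob C P = (\<Sum>i\<in>UNIV. \<Sum>j\<in>UNIV. C i j * P i j)"

definition nonneg_rank :: "('n \<Rightarrow> 'm \<Rightarrow> real) \<Rightarrow> nat" where
  "nonneg_rank P = (LEAST r. \<exists>(u :: nat \<Rightarrow> 'n \<Rightarrow> real) (v :: nat \<Rightarrow> 'm \<Rightarrow> real).
       (\<forall>k i. 0 \<le> u k i) \<and> (\<forall>k j. 0 \<le> v k j) \<and>
       (\<forall>i j. P i j = (\<Sum>k<r. u k i * v k j)))"

definition kl_term :: "real \<Rightarrow> real \<Rightarrow> ereal" where
  "kl_term x y = (if x = 0 then ereal y else if y = 0 then \<infinity>
                  else ereal (x * ln (x / y) - x + y))"

definition KL :: "('n::finite \<Rightarrow> real) \<Rightarrow> ('n \<Rightarrow> real) \<Rightarrow> ereal" where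
  "KL x y = (\<Sum>i\<in>UNIV. kl_term (x i) (y i))"

definition SR_obj :: "('n::finite \<Rightarrow> 'm::finite \<Rightarrow> real) \<Rightarrow> ('n \<Rightarrow> real) \<Rightarrow> real
     \<Rightarrow> ('n \<Rightarrow> 'm \<Rightarrow> real) \<Rightarrow> ereal" where
  "SR_obj C a \<tau> P = ereal (frob C P) + ereal \<tau> * KL (row_sums P) a"

definition SRW :: "('n::finite \<Rightarrow> 'm::finite \<Rightarrow> real) \<Rightarrow> ('n \<Rightarrow> real) \<Rightarrow> ('m \<Rightarrow> real) \<Rightarrow> real \<Rightarrow> ereal" where
  "SRW C a b \<tau> = Inf {SR_obj C a \<tau> P | P. nonneg_mat P \<and> col_sums P = b}"

definition SRW_r :: "('n::finite \<Rightarrow> 'm::finite \<Rightarrow> real) \<Rightarrow> ('n \<Rightarrow> real) \<Rightarrow> ('m \<Rightarrow> real) \<Rightarrow> real \<Rightarrow> nat \<Rightarrow> ereal" where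
  "SRW_r C a b \<tau> r = Inf {SR_obj C a \<tau> P | P. nonneg_mat P \<and> col_sums P = b \<and> nonneg_rank P \<le> r}"

definition transport_polytope :: "('n::finite \<Rightarrow> real) \<Rightarrow> ('m::finite \<Rightarrow> real) \<Rightarrow> ('n \<Rightarrow> 'm \<Rightarrow> real) set" where
  "transport_polytope a b = {P. nonneg_mat P \<and> row_sums P = a \<and> col_sums P = b}"

definition W :: "('n::finite \<Rightarrow> 'm::finite \<Rightarrow> real) \<Rightarrow> ('n \<Rightarrow> real) \<Rightarrow> ('m \<Rightarrow> real) \<Rightarrow> real" where
  "W C a b = Inf (frob C ` transport_polytope a b)"

definition W_r :: "('n::finite \<Rightarrow> 'm::finite \<Rightarrow> real) \<Rightarrow> ('n \<Rightarrow> real) \<Rightarrow> ('m \<Rightarrow> real) \<Rightarrow> nat \<Rightarrow> real" where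
  "W_r C a b r = Inf (frob C ` {P \<in> transport_polytope a b. nonneg_rank P \<le> r})"

definition prob_simplex :: "('k::finite \<Rightarrow> real) set" where
  "prob_simplex = {x. (\<forall>i. 0 \<le> x i) \<and> (\<Sum>i\<in>UNIV. x i) = 1}"

end

theory Submission
  imports Defs
begin

lemma small_subset:
  fixes f :: "'a \<Rightarrow> real"
  assumes "finite A" "s \<le> card A"
  shows "\<exists>S\<subseteq>A. card S = s \<and> real (card A) * sum f S \<le> real s * sum f A"
proof -
  obtain d where "card A = s + d" using assms(2) le_Suc_ex by blast
  then show ?thesis using assms(1)
  proof (induction d arbitrary: A)
    case 0
    then show ?case by auto
  next
    case (Suc d)
    then have "A \<noteq> {}" by auto
    have "Max (f ` A) \<in> f ` A" using Suc.prems \<open>A \<noteq> {}\<close> by (intro Max_in) auto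
    then obtain x where x: "x \<in> A" "f x = Max (f ` A)" by force
    have fx: "\<And>y. y \<in> A \<Longrightarrow> f y \<le> f x" using x Suc.prems by simp
    define A' where "A' = A - {x}"
    have cA': "card A' = s + d" using Suc.prems x unfolding A'_def by simp
    have finA': "finite A'" using Suc.prems A'_def by simp
    obtain S where S: "S \<subseteq> A'" "card S = s" "real (card A') * sum f S \<le> real s * sum f A'"
      using Suc.IH[OF cA' finA'] by blast
    define N where "N = card A'"
    have cA: "card A = N + 1" using cA' Suc.prems N_def by simp
    have sA: "sum f A = sum f A' + f x"
      using Suc.prems x unfolding A'_def by (simp add: sum.remove)
    have sA': "sum f A' \<le> real N * f x"
      using sum_bounded_above[of A' f "f x"] fx unfolding A'_def N_def by auto
    show ?case
    proof (cases "N = 0")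
      case True
      then have "s = 0" using cA' N_def by simp
      then have "S = {}" using S finA' by (metis card_0_eq finite_subset)
      then show ?thesis using \<open>s = 0\<close> by auto
    next
      case False
      have h1: "real N * (real (N+1) * sum f S) \<le> real (N+1) * (real s * sum f A')"
        using S(3) N_def by (simp add: mult.left_commute mult_left_mono)
      have h2: "real s * sum f A' \<le> real s * (real N * f x)"
        using sA' by (simp add: mult_left_mono)
      have "real N * (real (N+1) * sum f S) \<le> real N * (real s * sum f A) "
        using h1 h2 unfolding sA by (simp add: algebra_simps)
      then have "real (N+1) * sum f S \<le> real s * sum f A"
        using False by (simp add: mult_le_cancel_left)
      then show ?thesis using S A'_def cA by auto
    qed
  qed
qed

lemma Cmax: "C i j \<le> Max (case_prod C ` (UNIV :: ('n::finite \<times> 'm::finite) set))"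
  by (rule Max_ge) auto
lemma Cmin: "Min (case_prod C ` (UNIV :: ('n::finite \<times> 'm::finite) set)) \<le> C i j"
  by (rule Min_le) auto

lemma merge_rows:
  fixes P :: "'n::finite \<Rightarrow> 'm::finite \<Rightarrow> real" and C :: "'n \<Rightarrow> 'm \<Rightarrow> real"
  assumes P: "nonneg_mat P" and r2: "2 \<le> r" and rn: "r \<le> CARD('n)"
  shows "\<exists>P'. nonneg_mat P' \<and> row_sums P' = row_sums P \<and> col_sums P' = col_sums P \<and>
     (\<exists>(u :: nat \<Rightarrow> 'n \<Rightarrow> real) (v :: nat \<Rightarrow> 'm \<Rightarrow> real). (\<forall>k i. 0 \<le> u k i) \<and> (\<forall>k j. 0 \<le> v k j) \<and>
        (\<forall>i j. P' i j = (\<Sum>k<r. u k i * v k j))) \<and>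
     frob C P' \<le> frob C P + (\<Sum>i\<in>UNIV. \<Sum>j\<in>UNIV. P i j) *
        (Max (case_prod C ` UNIV) - Min (case_prod C ` UNIV)) * ln (real CARD('n) / real (r - 1))"
proof -
  define n where "n = CARD('n)"
  define f where "f = row_sums P"
  have Pnn: "\<And>i j. 0 \<le> P i j" using P unfolding nonneg_mat_def by auto
  have fnn: "\<And>i. 0 \<le> f i" unfolding f_def row_sums_def using Pnn by (simp add: sum_nonneg)
  obtain S where S: "card S = n - (r-1)" "real n * sum f S \<le> real (n-(r-1)) * sum f UNIV"
    using small_subset[of "UNIV :: 'n set" "n - (r-1)" f] n_def by auto
  define T where "T = UNIV - S"
  have cardT: "card T = r - 1" unfolding T_def using S rn n_def
    by (simp add: card_Diff_subset)
  obtain g where g: "bij_betw g {0..<r-1} T"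
    using ex_bij_betw_nat_finite[of T] cardT by auto
  define mS where "mS = sum f S"
  define cS where "cS = (\<lambda>j. \<Sum>i\<in>S. P i j)"
  define P' where "P' = (\<lambda>i j. if i \<in> S then f i * cS j / mS else P i j)"
  have sum_cS: "(\<Sum>j\<in>UNIV. cS j) = mS" unfolding cS_def mS_def f_def row_sums_def
    using sum.swap by metis
  have cS_nn: "\<And>j. 0 \<le> cS j" unfolding cS_def using Pnn by (simp add: sum_nonneg)
  have mS0: "\<And>i. mS = 0 \<Longrightarrow> i \<in> S \<Longrightarrow> f i = 0"
    unfolding mS_def using fnn by (simp add: sum_nonneg_eq_0_iff)
  have cS0: "\<And>j. mS = 0 \<Longrightarrow> cS j = 0"
  proof -
    fix j assume "mS = 0"
    have "cS j \<le> (\<Sum>j\<in>UNIV. cS j)" by (rule member_le_sum) (auto simp: cS_nn)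
    then show "cS j = 0" using \<open>mS = 0\<close> sum_cS cS_nn[of j] by simp
  qed
  have nnP': "nonneg_mat P'" unfolding nonneg_mat_def P'_def
    using fnn cS_nn Pnn mS_def by (simp add: sum_nonneg)
  have rowP': "row_sums P' = row_sums P"
  proof
    fix i
    show "row_sums P' i = row_sums P i"
    proof (cases "i \<in> S")
      case True
      have "row_sums P' i = f i * (\<Sum>j\<in>UNIV. cS j) / mS"
        unfolding row_sums_def P'_def using True
        by (simp add: sum_divide_distrib[symmetric] sum_distrib_left[symmetric])
      also have "\<dots> = f i" using sum_cS mS0 True by (cases "mS = 0") auto
      finally show ?thesis unfolding f_def .
    next
      case False
      then show ?thesis unfolding row_sums_def P'_def by simp
    qed
  qed
  have colP': "col_sums P' = col_sums P"
  proof
    fix j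
    have "col_sums P' j = (\<Sum>i\<in>T. P' i j) + (\<Sum>i\<in>S. P' i j)"
      unfolding col_sums_def T_def by (simp add: sum.subset_diff[of S UNIV])
    also have "(\<Sum>i\<in>S. P' i j) = (\<Sum>i\<in>S. f i) * cS j / mS"
      unfolding P'_def by (simp add: sum_divide_distrib[symmetric] sum_distrib_right[symmetric])
    also have "\<dots> = cS j" using cS0 mS_def by (cases "mS = 0") auto
    also have "(\<Sum>i\<in>T. P' i j) = (\<Sum>i\<in>T. P i j)"
      unfolding P'_def T_def by simp
    also have "(\<Sum>i\<in>T. P i j) + cS j = col_sums P j"
      unfolding col_sums_def T_def cS_def by (simp add: sum.subset_diff[of S UNIV])
    finally show "col_sums P' j = col_sums P j" .
  qed
  define u where "u = (\<lambda>k i. if k < r-1 then (if i = g k then 1 else 0) else (if i \<in> S then f i else 0::real))"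
  define v where "v = (\<lambda>k j. if k < r-1 then P (g k) j else cS j / mS)"
  have dec: "\<forall>i j. P' i j = (\<Sum>k<r. u k i * v k j)"
  proof (intro allI)
    fix i j
    have r: "r = Suc (r-1)" using r2 by simp
    have "(\<Sum>k<r. u k i * v k j) = (\<Sum>k<r-1. u k i * v k j) + u (r-1) i * v (r-1) j"
      by (subst r) (simp only: sum.lessThan_Suc)
    also have "(\<Sum>k<r-1. u k i * v k j) = (\<Sum>k\<in>{0..<r-1}. (\<lambda>t. if i = t then P t j else 0) (g k))"
      unfolding u_def v_def by (intro sum.cong) auto
    also have "\<dots> = (\<Sum>t\<in>T. if i = t then P t j else 0)"
      by (rule sum.reindex_bij_betw[OF g])
    also have "\<dots> = (if i \<in> T then P i j else 0)"
      by (simp add: sum.delta)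
    finally show "P' i j = (\<Sum>k<r. u k i * v k j)"
      unfolding P'_def u_def v_def T_def by auto
  qed
  have unn: "\<forall>k i. 0 \<le> u k i" unfolding u_def using fnn by auto
  have vnn: "\<forall>k j. 0 \<le> v k j" unfolding v_def using Pnn cS_nn mS_def fnn
    by (auto simp: sum_nonneg)
  define M where "M = Max (case_prod C ` UNIV)"
  define m where "m = Min (case_prod C ` UNIV)"
  have frob_split: "\<And>Q. frob C Q = (\<Sum>i\<in>T. \<Sum>j\<in>UNIV. C i j * Q i j) + (\<Sum>i\<in>S. \<Sum>j\<in>UNIV. C i j * Q i j)"
    unfolding frob_def T_def by (simp add: sum.subset_diff[of S UNIV])
  have rowsS: "\<And>Q. row_sums Q = row_sums P \<Longrightarrow> (\<Sum>i\<in>S. \<Sum>j\<in>UNIV. Q i j) = mS"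
    unfolding mS_def f_def by (metis row_sums_def)
  have up: "(\<Sum>i\<in>S. \<Sum>j\<in>UNIV. C i j * P' i j) \<le> M * mS"
  proof -
    have "(\<Sum>i\<in>S. \<Sum>j\<in>UNIV. C i j * P' i j) \<le> (\<Sum>i\<in>S. \<Sum>j\<in>UNIV. M * P' i j)"
      using nnP' Cmax[of C] unfolding nonneg_mat_def M_def
      by (intro sum_mono mult_right_mono) auto
    also have "\<dots> = M * (\<Sum>i\<in>S. \<Sum>j\<in>UNIV. P' i j)" by (simp add: sum_distrib_left)
    also have "\<dots> = M * mS" using rowsS[OF rowP'] by simp
    finally show ?thesis .
  qed
  have lo: "m * mS \<le> (\<Sum>i\<in>S. \<Sum>j\<in>UNIV. C i j * P i j)"
  proof -
    have "m * mS = m * (\<Sum>i\<in>S. \<Sum>j\<in>UNIV. P i j)" using rowsS[of P] by simp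
    also have "\<dots> = (\<Sum>i\<in>S. \<Sum>j\<in>UNIV. m * P i j)" by (simp add: sum_distrib_left)
    also have "\<dots> \<le> (\<Sum>i\<in>S. \<Sum>j\<in>UNIV. C i j * P i j)"
      using Pnn Cmin[of C] unfolding m_def
      by (intro sum_mono mult_right_mono) auto
    finally show ?thesis .
  qed
  have TT: "(\<Sum>i\<in>T. \<Sum>j\<in>UNIV. C i j * P' i j) = (\<Sum>i\<in>T. \<Sum>j\<in>UNIV. C i j * P i j)"
    unfolding P'_def T_def by simp
  have diff: "frob C P' \<le> frob C P + (M - m) * mS"
    using frob_split[of P'] frob_split[of P] up lo TT by (simp add: algebra_simps)
  define tot where "tot = (\<Sum>i\<in>UNIV. \<Sum>j\<in>UNIV. P i j)"
  have tot: "sum f UNIV = tot" unfolding tot_def f_def row_sums_def by simp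
  have totnn: "0 \<le> tot" unfolding tot_def using Pnn by (simp add: sum_nonneg)
  have Mm: "0 \<le> M - m" using Cmax[of C] Cmin[of C] M_def m_def by (metis diff_ge_0_iff_ge order.trans)
  have npos: "0 < n" unfolding n_def by simp
  have mSle: "mS \<le> (real (n - (r-1)) / real n) * tot"
    using S(2) npos unfolding mS_def tot by (simp add: field_simps)
  have lnb: "real (n - (r-1)) / real n \<le> ln (real n / real (r - 1))"
  proof -
    define x where "x = real (r-1) / real n"
    have xpos: "0 < x" unfolding x_def using r2 npos by simp
    have "real (n - (r-1)) / real n = 1 - x" unfolding x_def using rn n_def npos
      by (simp add: of_nat_diff field_simps)
    also have "\<dots> \<le> - ln x" using ln_le_minus_one[OF xpos] by simp
    also have "\<dots> = ln (real n / real (r-1))" unfolding x_def using r2 npos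
      by (simp add: ln_div)
    finally show ?thesis .
  qed
  have "(M - m) * mS \<le> (M - m) * ((real (n - (r-1)) / real n) * tot)"
    using mSle Mm by (rule mult_left_mono)
  also have "\<dots> \<le> (M - m) * (ln (real n / real (r - 1)) * tot)"
    using lnb Mm totnn by (intro mult_left_mono mult_right_mono) auto
  finally have "frob C P' \<le> frob C P + tot * (M - m) * ln (real n / real (r - 1))"
    using diff by (simp add: algebra_simps)
  then show ?thesis using nnP' rowP' colP' dec unn vnn unfolding tot_def M_def m_def n_def
    by blast
qed

lemma rank_le:
  assumes "(\<forall>k i. 0 \<le> (u :: nat \<Rightarrow> 'n \<Rightarrow> real) k i) \<and> (\<forall>k j. 0 \<le> (v :: nat \<Rightarrow> 'm \<Rightarrow> real) k j) \<and>
        (\<forall>i j. P i j = (\<Sum>k<r. u k i * v k j))"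
  shows "nonneg_rank P \<le> r"
  unfolding nonneg_rank_def by (rule Least_le) (use assms in blast)

lemma merge_min:
  fixes P :: "'n::finite \<Rightarrow> 'm::finite \<Rightarrow> real" and C :: "'n \<Rightarrow> 'm \<Rightarrow> real"
  assumes P: "nonneg_mat P" and r2: "2 \<le> r" and rn: "r \<le> min CARD('n) CARD('m)"
  shows "\<exists>P'. nonneg_mat P' \<and> row_sums P' = row_sums P \<and> col_sums P' = col_sums P \<and>
     nonneg_rank P' \<le> r \<and>
     frob C P' \<le> frob C P + (\<Sum>i\<in>UNIV. \<Sum>j\<in>UNIV. P i j) *
        (Max (case_prod C ` UNIV) - Min (case_prod C ` UNIV)) * ln (real (min CARD('n) CARD('m)) / real (r - 1))"
proof (cases "CARD('n) \<le> CARD('m)")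
  case True
  have rn': "r \<le> CARD('n)" using rn by simp
  have mn: "min CARD('n) CARD('m) = CARD('n)" using True by simp
  obtain P' u v where "nonneg_mat P' \<and> row_sums P' = row_sums P \<and> col_sums P' = col_sums P \<and>
     ((\<forall>k i. 0 \<le> (u :: nat \<Rightarrow> 'n \<Rightarrow> real) k i) \<and> (\<forall>k j. 0 \<le> (v :: nat \<Rightarrow> 'm \<Rightarrow> real) k j) \<and>
        (\<forall>i j. P' i j = (\<Sum>k<r. u k i * v k j))) \<and>
     frob C P' \<le> frob C P + (\<Sum>i\<in>UNIV. \<Sum>j\<in>UNIV. P i j) *
        (Max (case_prod C ` UNIV) - Min (case_prod C ` UNIV)) * ln (real CARD('n) / real (r - 1))"
    using merge_rows[OF P r2 rn', of C] by blast
  then show ?thesis unfolding mn using rank_le[of u v P' r] by blast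
next
  case False
  define PT where "PT = (\<lambda>j i. P i j)"
  define CT where "CT = (\<lambda>j i. C i j)"
  have PT: "nonneg_mat PT" using P unfolding PT_def nonneg_mat_def by auto
  have rm: "r \<le> CARD('m)" using rn by simp
  obtain Q u v where Q: "nonneg_mat Q" "row_sums Q = row_sums PT" "col_sums Q = col_sums PT"
    "(\<forall>k i. 0 \<le> (u :: nat \<Rightarrow> 'm \<Rightarrow> real) k i) \<and> (\<forall>k j. 0 \<le> (v :: nat \<Rightarrow> 'n \<Rightarrow> real) k j) \<and>
        (\<forall>i j. Q i j = (\<Sum>k<r. u k i * v k j))"
    "frob CT Q \<le> frob CT PT + (\<Sum>i\<in>UNIV. \<Sum>j\<in>UNIV. PT i j) *
        (Max (case_prod CT ` UNIV) - Min (case_prod CT ` UNIV)) * ln (real CARD('m) / real (r - 1))"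
    using merge_rows[OF PT r2 rm, of CT] by blast
  define P' where "P' = (\<lambda>i j. Q j i)"
  have "nonneg_mat P'" using Q(1) unfolding P'_def nonneg_mat_def by auto
  moreover have "row_sums P' = row_sums P"
  proof
    fix i
    have "row_sums P' i = col_sums Q i" unfolding P'_def row_sums_def col_sums_def by simp
    also have "\<dots> = col_sums PT i" using Q(3) by simp
    also have "\<dots> = row_sums P i" unfolding PT_def row_sums_def col_sums_def by simp
    finally show "row_sums P' i = row_sums P i" .
  qed
  moreover have "col_sums P' = col_sums P"
  proof
    fix i
    have "col_sums P' i = row_sums Q i" unfolding P'_def row_sums_def col_sums_def by simp
    also have "\<dots> = row_sums PT i" using Q(2) by simp
    also have "\<dots> = col_sums P i" unfolding PT_def row_sums_def col_sums_def by simp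
    finally show "col_sums P' i = col_sums P i" .
  qed
  moreover have "nonneg_rank P' \<le> r"
    by (rule rank_le[of v u]) (use Q(4) in \<open>auto simp: P'_def mult.commute\<close>)
  moreover have "frob CT Q = frob C P'" unfolding frob_def CT_def P'_def by (rule sum.swap)
  moreover have "frob CT PT = frob C P" unfolding frob_def CT_def PT_def by (rule sum.swap)
  moreover have "(\<Sum>i\<in>UNIV. \<Sum>j\<in>UNIV. PT i j) = (\<Sum>i\<in>UNIV. \<Sum>j\<in>UNIV. P i j)"
    unfolding PT_def by (rule sum.swap)
  moreover have "case_prod CT ` UNIV = case_prod C ` UNIV"
  proof (intro equalityI subsetI)
    fix x assume "x \<in> case_prod CT ` UNIV"
    then obtain j i where "x = CT j i" by auto
    then show "x \<in> case_prod C ` UNIV" unfolding CT_def by (intro image_eqI[of _ _ "(i,j)"]) auto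
  next
    fix x assume "x \<in> case_prod C ` UNIV"
    then obtain i j where "x = C i j" by auto
    then show "x \<in> case_prod CT ` UNIV" unfolding CT_def by (intro image_eqI[of _ _ "(j,i)"]) auto
  qed
  moreover have "min CARD('n) CARD('m) = CARD('m)" using False by simp
  ultimately show ?thesis using Q(5) by (intro exI[of _ P']) simp
qed

lemma kl_term_nonneg:
  assumes "0 \<le> x" "0 \<le> y"
  shows "0 \<le> kl_term x y"
proof -
  have "x * ln (x / y) - x + y \<ge> 0" if "x > 0" "y > 0"
  proof -
    have "ln (y / x) \<le> y / x - 1" using ln_le_minus_one that by simp
    then have "ln (x / y) \<ge> 1 - y / x" using that by (simp add: ln_div)
    then have "x * ln (x / y) \<ge> x * (1 - y / x)" using that by (intro mult_left_mono) auto
    moreover have "x * (1 - y / x) = x - y" using that by (simp add: field_simps)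
    ultimately show ?thesis by simp
  qed
  then show ?thesis using assms unfolding kl_term_def by auto
qed

lemma KL_nonneg:
  assumes "\<forall>i. 0 \<le> x i" "\<forall>i. 0 \<le> y i"
  shows "0 \<le> KL x y"
  unfolding KL_def using assms kl_term_nonneg by (simp add: sum_nonneg)

lemma frob_nonneg:
  assumes "\<forall>i j. 0 \<le> C i j" "nonneg_mat P"
  shows "0 \<le> frob C P"
  unfolding frob_def using assms unfolding nonneg_mat_def by (simp add: sum_nonneg)

lemma tot_col:
  fixes P :: "'n::finite \<Rightarrow> 'm::finite \<Rightarrow> real"
  shows "(\<Sum>i\<in>UNIV. \<Sum>j\<in>UNIV. P i j) = (\<Sum>j\<in>UNIV. col_sums P j)"
  unfolding col_sums_def by (rule sum.swap)

theorem proposition6: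
  fixes C :: "'n::finite \<Rightarrow> 'm::finite \<Rightarrow> real"
    and a :: "'n \<Rightarrow> real" and b :: "'m \<Rightarrow> real"
    and \<tau> :: real and r :: nat
  assumes C_nonneg: "\<forall>i j. 0 \<le> C i j"
    and a_nonneg: "\<forall>i. 0 \<le> a i" and a_nonzero: "\<exists>i. a i \<noteq> 0"
    and b_nonneg: "\<forall>j. 0 \<le> b j"
    and tau_pos: "\<tau> > 0"
    and r_ge: "2 \<le> r" and r_le: "r \<le> min CARD('n) CARD('m)"
  shows "\<bar>SRW_r C a b \<tau> r - SRW C a b \<tau>\<bar>
           \<le> ereal ((\<Sum>j\<in>UNIV. b j) * (Max (case_prod C ` UNIV) - Min (case_prod C ` UNIV))
                    * ln (real (min CARD('n) CARD('m)) / real (r - 1)))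
      \<and> (a \<in> prob_simplex \<and> b \<in> prob_simplex \<longrightarrow>
           \<bar>W_r C a b r - W C a b\<bar>
             \<le> (Max (case_prod C ` UNIV) - Min (case_prod C ` UNIV))
                 * ln (real (min CARD('n) CARD('m)) / real (r - 1)))"
proof
  define L where "L = (Max (case_prod C ` UNIV) - Min (case_prod C ` UNIV))
                 * ln (real (min CARD('n) CARD('m)) / real (r - 1))"
  define d where "d = (\<Sum>j\<in>UNIV. b j) * L"
  have merge: "\<And>P. nonneg_mat P \<Longrightarrow> \<exists>P'. nonneg_mat P' \<and> row_sums P' = row_sums P \<and>
      col_sums P' = col_sums P \<and> nonneg_rank P' \<le> r \<and>
      frob C P' \<le> frob C P + (\<Sum>j\<in>UNIV. col_sums P j) * L"
    using merge_min[OF _ r_ge r_le, of _ C] unfolding L_def tot_col by (simp add: mult.assoc)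
  define A where "A = {SR_obj C a \<tau> P | P. nonneg_mat P \<and> col_sums P = b}"
  define B where "B = {SR_obj C a \<tau> P | P. nonneg_mat P \<and> col_sums P = b \<and> nonneg_rank P \<le> r}"
  have SRW_eq: "SRW C a b \<tau> = Inf A" unfolding SRW_def A_def by simp
  have SRWr_eq: "SRW_r C a b \<tau> r = Inf B" unfolding SRW_r_def B_def by simp
  have BA: "B \<subseteq> A" unfolding A_def B_def by auto
  have obj_nn: "\<And>P. nonneg_mat P \<Longrightarrow> 0 \<le> SR_obj C a \<tau> P"
  proof -
    fix P :: "'n \<Rightarrow> 'm \<Rightarrow> real" assume P: "nonneg_mat P"
    have "\<forall>i. 0 \<le> row_sums P i" using P unfolding nonneg_mat_def row_sums_def by (simp add: sum_nonneg)
    then have "0 \<le> KL (row_sums P) a" using KL_nonneg a_nonneg by blast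
    moreover have "0 \<le> frob C P" using frob_nonneg[OF C_nonneg P] .
    ultimately show "0 \<le> SR_obj C a \<tau> P" unfolding SR_obj_def using tau_pos
      by (simp add: ereal_zero_le_0_iff add_nonneg_nonneg)
  qed
  obtain i0 where i0: "a i0 \<noteq> 0" using a_nonzero by blast
  define P0 where "P0 = (\<lambda>i j. if i = i0 then b j else 0)"
  have P0nn: "nonneg_mat P0" unfolding P0_def nonneg_mat_def using b_nonneg by auto
  have P0col: "col_sums P0 = b" unfolding P0_def col_sums_def by (simp add: if_distrib)
  have P0rank: "nonneg_rank P0 \<le> r"
  proof -
    have "nonneg_rank P0 \<le> 1"
      by (rule rank_le[of "\<lambda>k i. if i = i0 then 1 else 0" "\<lambda>k j. b j"]) (auto simp: P0_def b_nonneg)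
    then show ?thesis using r_ge by simp
  qed
  have P0fin: "SR_obj C a \<tau> P0 \<noteq> \<infinity>"
  proof -
    have "\<And>i. kl_term (row_sums P0 i) (a i) \<noteq> \<infinity>"
    proof -
      fix i show "kl_term (row_sums P0 i) (a i) \<noteq> \<infinity>"
        using i0 unfolding kl_term_def row_sums_def P0_def by (cases "i = i0") auto
    qed
    then have "KL (row_sums P0) a \<noteq> \<infinity>" unfolding KL_def by (simp add: sum_Pinfty)
    moreover have "0 \<le> KL (row_sums P0) a"
      using KL_nonneg[of "row_sums P0" a] P0nn a_nonneg
      unfolding nonneg_mat_def row_sums_def by (simp add: sum_nonneg)
    ultimately obtain k where "KL (row_sums P0) a = ereal k"
      by (cases "KL (row_sums P0) a") auto
    then show ?thesis unfolding SR_obj_def by simp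
  qed
  have P0B: "SR_obj C a \<tau> P0 \<in> B" unfolding B_def using P0nn P0col P0rank by auto
  have SRW_nn: "0 \<le> Inf A" unfolding A_def using obj_nn by (auto intro!: Inf_greatest)
  have AB: "Inf A \<le> Inf B" using BA by (rule Inf_superset_mono)
  have Bfin: "Inf B \<noteq> \<infinity>" using Inf_lower[OF P0B] P0fin by auto
  obtain s where s: "Inf A = ereal s" using SRW_nn AB Bfin by (cases "Inf A") auto
  obtain t where t: "Inf B = ereal t" using SRW_nn AB Bfin by (cases "Inf B") auto
  have upper: "ereal (t - d) \<le> Inf A"
  proof (unfold A_def, rule Inf_greatest)
    fix x assume "x \<in> {SR_obj C a \<tau> P | P. nonneg_mat P \<and> col_sums P = b}"
    then obtain P where P: "nonneg_mat P" "col_sums P = b" and x: "x = SR_obj C a \<tau> P" by auto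
    obtain P' where P': "nonneg_mat P'" "row_sums P' = row_sums P" "col_sums P' = col_sums P"
      "nonneg_rank P' \<le> r" "frob C P' \<le> frob C P + (\<Sum>j\<in>UNIV. col_sums P j) * L"
      using merge[OF P(1)] by blast
    have "SR_obj C a \<tau> P' \<in> B" unfolding B_def using P' P by auto
    then have "ereal t \<le> SR_obj C a \<tau> P'" using Inf_lower t by metis
    then have "ereal t \<le> ereal (frob C P') + ereal \<tau> * KL (row_sums P) a"
      unfolding SR_obj_def P'(2) .
    moreover have "frob C P' \<le> frob C P + d" using P'(5) P(2) d_def by simp
    ultimately show "ereal (t - d) \<le> x" unfolding x SR_obj_def
      by (cases "ereal \<tau> * KL (row_sums P) a") auto
  qed
  show "\<bar>SRW_r C a b \<tau> r - SRW C a b \<tau>\<bar> \<le> ereal ((\<Sum>j\<in>UNIV. b j) * (Max (case_prod C ` UNIV) - Min (case_prod C ` UNIV))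
                    * ln (real (min CARD('n) CARD('m)) / real (r - 1)))"
    using AB upper unfolding SRW_eq SRWr_eq s t d_def L_def by (simp add: mult.assoc)
next
  define L where "L = (Max (case_prod C ` UNIV) - Min (case_prod C ` UNIV))
                 * ln (real (min CARD('n) CARD('m)) / real (r - 1))"
  have merge: "\<And>P. nonneg_mat P \<Longrightarrow> \<exists>P'. nonneg_mat P' \<and> row_sums P' = row_sums P \<and>
      col_sums P' = col_sums P \<and> nonneg_rank P' \<le> r \<and>
      frob C P' \<le> frob C P + (\<Sum>j\<in>UNIV. col_sums P j) * L"
    using merge_min[OF _ r_ge r_le, of _ C] unfolding L_def tot_col by (simp add: mult.assoc)
  show "a \<in> prob_simplex \<and> b \<in> prob_simplex \<longrightarrow> \<bar>W_r C a b r - W C a b\<bar> \<le> L"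
  proof
    assume ab: "a \<in> prob_simplex \<and> b \<in> prob_simplex"
    define T where "T = transport_polytope a b"
    define Tr where "Tr = {P \<in> T. nonneg_rank P \<le> r}"
    have W_eq: "W C a b = Inf (frob C ` T)" unfolding W_def T_def ..
    have Wr_eq: "W_r C a b r = Inf (frob C ` Tr)" unfolding W_r_def Tr_def T_def ..
    define P0 where "P0 = (\<lambda>i j. a i * b j)"
    have P0T: "P0 \<in> Tr" unfolding Tr_def T_def transport_polytope_def
    proof (intro CollectI conjI)
      show "nonneg_mat P0" using ab unfolding P0_def nonneg_mat_def prob_simplex_def by auto
      show "row_sums P0 = a" using ab unfolding P0_def row_sums_def prob_simplex_def
        by (simp add: sum_distrib_left[symmetric])
      show "col_sums P0 = b" using ab unfolding P0_def col_sums_def prob_simplex_def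
        by (simp add: sum_distrib_right[symmetric])
      show "nonneg_rank P0 \<le> r"
      proof -
        have "nonneg_rank P0 \<le> 1"
          by (rule rank_le[of "\<lambda>k i. a i" "\<lambda>k j. b j"]) (use ab in \<open>auto simp: P0_def prob_simplex_def\<close>)
        then show ?thesis using r_ge by simp
      qed
    qed
    have TrT: "Tr \<subseteq> T" unfolding Tr_def by auto
    have bdd: "bdd_below (frob C ` T)"
      unfolding T_def transport_polytope_def
      by (rule bdd_belowI[of _ 0]) (use frob_nonneg[OF C_nonneg] in auto)
    have bddr: "bdd_below (frob C ` Tr)"
      by (rule bdd_below_mono[OF bdd]) (use TrT in auto)
    have le1: "Inf (frob C ` T) \<le> Inf (frob C ` Tr)"
      by (rule cInf_superset_mono) (use P0T bdd TrT in auto)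
    have sb: "(\<Sum>j\<in>UNIV. b j) = 1" using ab unfolding prob_simplex_def by auto
    have le2: "Inf (frob C ` Tr) - L \<le> Inf (frob C ` T)"
    proof (rule cInf_greatest)
      show "frob C ` T \<noteq> {}" using P0T TrT by auto
    next
      fix x assume "x \<in> frob C ` T"
      then obtain P where P: "P \<in> T" "x = frob C P" by auto
      then have Pp: "nonneg_mat P" "row_sums P = a" "col_sums P = b"
        unfolding T_def transport_polytope_def by auto
      obtain P' where P': "nonneg_mat P'" "row_sums P' = row_sums P" "col_sums P' = col_sums P"
        "nonneg_rank P' \<le> r" "frob C P' \<le> frob C P + (\<Sum>j\<in>UNIV. col_sums P j) * L"
        using merge[OF Pp(1)] by blast
      have "P' \<in> Tr" unfolding Tr_def T_def transport_polytope_def using P' Pp by auto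
      then have "Inf (frob C ` Tr) \<le> frob C P'" using bddr by (intro cInf_lower) auto
      then show "Inf (frob C ` Tr) - L \<le> x" using P'(5) Pp(3) sb P(2) by simp
    qed
    show "\<bar>W_r C a b r - W C a b\<bar> \<le> L" unfolding W_eq Wr_eq using le1 le2 by simp
  qed
qed

end
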